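(* Let $M$ be a matroid with ground set $E(M)$, let $\Gamma$ be an abelian group and let $\psi\colon E(M)\to\Gamma$ be a labeling. The following are equivalent: (i) all bases of $M$ have the same label; (ii) $M$ has a basis $B$ such that $\psi(B')=\psi(B)$ for every basis $B'$ of $M$ with $|B\setminus B'|\le 1$; (iii) $\psi$ is constant on each connected component of $M$.
   Context: All groups are abelian and written additively. For a labeling $\psi\colon E\to\Gamma$ and $S\subseteq E$, $\psi(S):=\sum_{x\in S}\psi(x)$ is the label of $S$. The connected components of a matroid are the classes of the equivalence relation on $E(M)$ in which $x\sim y$ iff $x=y$ or $x$ and $y$ lie in a common circuit. *)

theory Defs
  imports Main
begin

definition matroid :: "'a set \<Rightarrow> ('a set \<Rightarrow> bool) \<Rightarrow> bool" where
  "matroid E indep \<longleftrightarrow>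
     finite E \<and>
     (\<forall>X. indep X \<longrightarrow> X \<subseteq> E) \<and>
     indep {} \<and>
     (\<forall>X Y. indep X \<and> Y \<subseteq> X \<longrightarrow> indep Y) \<and>
     (\<forall>X Y. indep X \<and> indep Y \<and> card X < card Y \<longrightarrow>
        (\<exists>e \<in> Y - X. indep (insert e X)))"

definition basis :: "'a set \<Rightarrow> ('a set \<Rightarrow> bool) \<Rightarrow> 'a set \<Rightarrow> bool" where
  "basis E indep B \<longleftrightarrow> indep B \<and> (\<forall>X. indep X \<and> B \<subseteq> X \<longrightarrow> X = B)"

definition circuit :: "'a set \<Rightarrow> ('a set \<Rightarrow> bool) \<Rightarrow> 'a set \<Rightarrow> bool" where
  "circuit E indep C \<longleftrightarrow> C \<subseteq> E \<and> \<not> indep C \<and> (\<forall>x\<in>C. indep (C - {x}))"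

definition same_component :: "'a set \<Rightarrow> ('a set \<Rightarrow> bool) \<Rightarrow> 'a \<Rightarrow> 'a \<Rightarrow> bool" where
  "same_component E indep x y \<longleftrightarrow>
     x \<in> E \<and> y \<in> E \<and> (x = y \<or> (\<exists>C. circuit E indep C \<and> x \<in> C \<and> y \<in> C))"

definition components :: "'a set \<Rightarrow> ('a set \<Rightarrow> bool) \<Rightarrow> 'a set set" where
  "components E indep = {{y. same_component E indep x y} | x. x \<in> E}"

definition label :: "('a \<Rightarrow> 'g::ab_group_add) \<Rightarrow> 'a set \<Rightarrow> 'g" where
  "label \<psi> S = (\<Sum>x\<in>S. \<psi> x)"

end

theory Submission
  imports Defs
begin

definition good :: "'a set \<Rightarrow> ('a set \<Rightarrow> bool) \<Rightarrow> ('a \<Rightarrow> 'g) \<Rightarrow> 'a set \<Rightarrow> bool" where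
  "good E indep \<psi> K \<longleftrightarrow> (\<forall>e C f. e \<in> E - K \<and> circuit E indep C \<and> C \<subseteq> insert e K \<and> f \<in> C \<longrightarrow> \<psi> f = \<psi> e)"

context
  fixes E :: "'a set" and indep :: "'a set \<Rightarrow> bool"
  assumes M: "matroid E indep"
begin

lemma finE: "finite E" using M by (simp add: matroid_def)
lemma indE: "indep X \<Longrightarrow> X \<subseteq> E" using M by (simp add: matroid_def)
lemma indfin: "indep X \<Longrightarrow> finite X" using indE finE finite_subset by blast
lemma indsub: "indep X \<Longrightarrow> Y \<subseteq> X \<Longrightarrow> indep Y" using M by (simp add: matroid_def)
lemma aug: "indep X \<Longrightarrow> indep Y \<Longrightarrow> card X < card Y \<Longrightarrow> \<exists>e \<in> Y - X. indep (insert e X)"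
  using M by (simp add: matroid_def)

lemma circ_exists:
  assumes "X \<subseteq> E" "\<not> indep X"
  shows "\<exists>C. C \<subseteq> X \<and> circuit E indep C"
proof -
  define F where "F = {Y. Y \<subseteq> X \<and> \<not> indep Y}"
  have fX: "finite X" using assms finE finite_subset by blast
  have "X \<in> F" using assms F_def by auto
  then obtain C where C: "C \<in> F" "\<forall>Y\<in>F. card C \<le> card Y"
    using ex_has_least_nat[of "\<lambda>Y. Y \<in> F" X card] by auto
  have "\<forall>x\<in>C. indep (C - {x})"
  proof
    fix x assume x: "x \<in> C"
    show "indep (C - {x})"
    proof (rule ccontr)
      assume "\<not> indep (C - {x})"
      then have "C - {x} \<in> F" using C F_def by auto
      then have "card C \<le> card (C - {x})" using C by auto
      moreover have "finite C" using C F_def fX finite_subset by auto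
      ultimately show False using x by (metis card_Diff1_less leD)
    qed
  qed
  moreover have "C \<subseteq> X" "\<not> indep C" using C unfolding F_def by auto
  ultimately have "circuit E indep C" using assms(1) unfolding circuit_def by blast
  then show ?thesis using \<open>C \<subseteq> X\<close> by blast
qed

lemma circ_dep: "circuit E indep C \<Longrightarrow> \<not> indep C" by (simp add: circuit_def)
lemma circ_sub: "circuit E indep C \<Longrightarrow> C \<subseteq> E" by (simp add: circuit_def)
lemma circ_del: "circuit E indep C \<Longrightarrow> x \<in> C \<Longrightarrow> indep (C - {x})" by (simp add: circuit_def)
lemma bas_ind: "basis E indep B \<Longrightarrow> indep B" by (simp add: basis_def)
lemma bas_max: "basis E indep B \<Longrightarrow> indep X \<Longrightarrow> B \<subseteq> X \<Longrightarrow> X = B" by (simp add: basis_def)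

lemma elim:
  assumes C1: "circuit E indep C1" and C2: "circuit E indep C2" and ne: "C1 \<noteq> C2"
    and e: "e \<in> C1" "e \<in> C2"
  shows "\<not> indep ((C1 \<union> C2) - {e})"
proof
  assume ind: "indep ((C1 \<union> C2) - {e})"
  have fin: "finite (C1 \<union> C2)" using C1 C2 finE finite_subset unfolding circuit_def by blast
  have "\<exists>f. f \<in> C1 - C2"
  proof (rule ccontr)
    assume "\<not> ?thesis"
    then have sub: "C1 \<subset> C2" using ne by auto
    then obtain x where x: "x \<in> C2" "x \<notin> C1" by auto
    then have "indep (C2 - {x})" using C2 by (auto simp: circuit_def)
    then have "indep C1" using indsub sub x by auto
    then show False using C1 circ_dep by auto
  qed
  then obtain f where f: "f \<in> C1" "f \<notin> C2" by auto
  define F where "F = {I. indep I \<and> C1 - {f} \<subseteq> I \<and> I \<subseteq> C1 \<union> C2}"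
  have "C1 - {f} \<in> F" using C1 f by (auto simp: F_def circuit_def)
  have "F \<subseteq> Pow (C1 \<union> C2)" unfolding F_def by auto
  then have finF: "finite F" using fin finite_subset by blast
  obtain I where I: "I \<in> F" "\<forall>J\<in>F. card J \<le> card I"
  proof -
    have "F \<noteq> {}" using \<open>C1 - {f} \<in> F\<close> by auto
    then obtain I where "I \<in> F" "card I = Max (card ` F)"
      using finF by (metis (mono_tags, lifting) Max_in empty_is_image finite_imageI imageE)
    moreover have "\<forall>J\<in>F. card J \<le> Max (card ` F)" using finF by auto
    ultimately show ?thesis using that by auto
  qed
  have "f \<notin> I"
  proof
    assume "f \<in> I"
    then have "C1 \<subseteq> I" using I F_def by auto
    moreover have "indep I" using I unfolding F_def by blast
    ultimately show False using indsub C1 circ_dep by blast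
  qed
  have "indep I" using I unfolding F_def by blast
  then have "\<not> C2 \<subseteq> I" using indsub C2 circ_dep by blast
  then obtain g where g: "g \<in> C2" "g \<notin> I" by auto
  have "I \<subseteq> (C1 \<union> C2) - {f, g}" using I F_def \<open>f \<notin> I\<close> g by auto
  then have "card I \<le> card ((C1 \<union> C2) - {f, g})" using fin by (simp add: card_mono)
  also have "\<dots> = card (C1 \<union> C2) - 2" proof -
    have "f \<noteq> g" using f g by auto
    then have "card {f, g} = 2" by simp
    moreover have "{f, g} \<subseteq> C1 \<union> C2" using f g by auto
    ultimately show ?thesis using fin by (simp add: card_Diff_subset)
  qed
  also have "\<dots> < card ((C1 \<union> C2) - {e})"
  proof -
    have "card (C1 \<union> C2) \<ge> 2"
    proof -
      have "{f, g} \<subseteq> C1 \<union> C2" using f g by auto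
      then have "card {f,g} \<le> card (C1 \<union> C2)" by (rule card_mono[OF fin])
      moreover have "f \<noteq> g" using f g by auto
      ultimately show ?thesis by simp
    qed
    then show ?thesis using fin e by (simp add: card_Diff_singleton)
  qed
  finally have "card I < card ((C1 \<union> C2) - {e})" .
  moreover have iI: "indep I" using I unfolding F_def by blast
  ultimately obtain z where z: "z \<in> ((C1 \<union> C2) - {e}) - I" "indep (insert z I)"
    using aug[OF iI ind] by blast
  then have "insert z I \<in> F" using I unfolding F_def by auto
  then have "card (insert z I) \<le> card I" using I by auto
  moreover have "finite I" using iI indfin by auto
  ultimately show False using z by simp
qed

lemma circ_in_ins: "circuit E indep C \<Longrightarrow> indep K \<Longrightarrow> C \<subseteq> insert e K \<Longrightarrow> e \<in> C"
  using indsub circ_dep by blast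

lemma uniq:
  assumes K: "indep K" and C1: "circuit E indep C1" and C2: "circuit E indep C2"
    and s1: "C1 \<subseteq> insert e K" and s2: "C2 \<subseteq> insert e K"
  shows "C1 = C2"
proof (rule ccontr)
  assume ne: "C1 \<noteq> C2"
  have "e \<in> C1" "e \<in> C2" using circ_in_ins K C1 C2 s1 s2 by auto
  then have "\<not> indep ((C1 \<union> C2) - {e})" using elim C1 C2 ne by auto
  moreover have "(C1 \<union> C2) - {e} \<subseteq> K" using s1 s2 by auto
  ultimately show False using indsub K by auto
qed

lemma basis_card: "basis E indep B1 \<Longrightarrow> basis E indep B2 \<Longrightarrow> card B1 = card B2"
proof -
  have *: "card X \<ge> card Y" if bX: "basis E indep X" and bY: "basis E indep Y" for X Y
  proof (rule ccontr)
    assume "\<not> ?thesis"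
    then have "card X < card Y" by simp
    then obtain e where "e \<in> Y - X" "indep (insert e X)"
      using aug[OF bas_ind[OF bX] bas_ind[OF bY]] by blast
    then show False using bX bas_max by (metis DiffD2 insertI1 subset_insertI)
  qed
  assume "basis E indep B1" "basis E indep B2"
  then show ?thesis using * le_antisym by blast
qed

lemma basis_of_card:
  assumes B: "basis E indep B" and I: "indep I" and c: "card I = card B"
  shows "basis E indep I"
  unfolding basis_def
proof (intro conjI allI impI I)
  fix X assume X: "indep X \<and> I \<subseteq> X"
  show "X = I"
  proof (rule ccontr)
    assume "X \<noteq> I"
    moreover have "finite X" using X indfin by auto
    moreover have "I \<subset> X" using X \<open>X \<noteq> I\<close> by auto
    ultimately have "card I < card X" using psubset_card_mono by blast
    then obtain e where "e \<in> X - B" "indep (insert e B)" using aug X B c bas_ind by metis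
    then show False using B bas_max by (metis DiffD2 insertI1 subset_insertI)
  qed
qed

lemma exchange:
  assumes K: "basis E indep K" and e: "e \<in> E" "e \<notin> K" and C: "circuit E indep C"
    and CK: "C \<subseteq> insert e K" and f: "f \<in> C" "f \<in> K"
  shows "basis E indep (insert e (K - {f}))"
proof -
  have iK: "indep K" using K bas_ind by auto
  have "indep (insert e (K - {f}))"
  proof (rule ccontr)
    assume "\<not> ?thesis"
    moreover have "insert e (K - {f}) \<subseteq> E" using e indE iK by auto
    ultimately obtain D where D: "D \<subseteq> insert e (K - {f})" "circuit E indep D"
      using circ_exists by blast
    then have "D = C" using uniq[OF iK] C CK by blast
    then show False using D f e by auto
  qed
  moreover have "card (insert e (K - {f})) = card K"
  proof -
    have "finite K" using indfin[OF iK] .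
    moreover have "card K > 0" using f \<open>finite K\<close> card_gt_0_iff by blast
    ultimately show ?thesis using e f by simp
  qed
  ultimately show ?thesis using basis_of_card K by auto
qed

lemma fund: "basis E indep K \<Longrightarrow> e \<in> E \<Longrightarrow> e \<notin> K \<Longrightarrow> \<exists>C. circuit E indep C \<and> C \<subseteq> insert e K"
proof -
  assume K: "basis E indep K" and e: "e \<in> E" "e \<notin> K"
  then have "\<not> indep (insert e K)" using bas_max by blast
  moreover have "insert e K \<subseteq> E" using e K indE bas_ind by auto
  ultimately show ?thesis using circ_exists by blast
qed

lemma extend_basis: "indep I \<Longrightarrow> \<exists>B. basis E indep B \<and> I \<subseteq> B"
proof -
  assume I: "indep I"
  define F where "F = {X. indep X \<and> I \<subseteq> X}"
  have "F \<subseteq> Pow E" using indE unfolding F_def by auto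
  then have finF: "finite F" using finE finite_subset by blast
  have "I \<in> F" using I F_def by auto
  then obtain X where X: "X \<in> F" "card X = Max (card ` F)"
    using finF by (metis (mono_tags, lifting) Max_in empty_iff finite_imageI imageE image_is_empty)
  have "basis E indep X" unfolding basis_def
  proof (intro conjI allI impI)
    show "indep X" using X F_def by auto
    fix Y assume Y: "indep Y \<and> X \<subseteq> Y"
    then have "Y \<in> F" using X F_def by auto
    then have "card Y \<le> card X" using X finF by auto
    then show "Y = X" using Y indfin by (metis card_seteq)
  qed
  then show ?thesis using X F_def by auto
qed

lemma label_exch:
  fixes \<psi> :: "'a \<Rightarrow> 'g::ab_group_add"
  assumes "finite K" "f \<in> K" "e \<notin> K"
  shows "label \<psi> (insert e (K - {f})) = label \<psi> K - \<psi> f + \<psi> e"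
  using assms unfolding label_def
  by (simp add: sum_diff1 algebra_simps)

lemma good_pres:
  assumes K: "basis E indep K" and g: "good E indep \<psi> K" and a: "a \<in> E" "a \<notin> K"
    and A: "circuit E indep A" "A \<subseteq> insert a K" and b: "b \<in> A" "b \<in> K"
  shows "good E indep \<psi> (insert a (K - {b}))"
  unfolding good_def
proof (intro allI impI)
  define K' where "K' = insert a (K - {b})"
  have K': "basis E indep K'" using exchange K a A b K'_def by auto
  have iK: "indep K" "indep K'" using K K' bas_ind by auto
  have gA: "\<psi> x = \<psi> a" if "x \<in> A" for x using g a A that unfolding good_def by blast
  fix e D' f
  assume H: "e \<in> E - insert a (K - {b}) \<and> circuit E indep D' \<and> D' \<subseteq> insert e (insert a (K - {b})) \<and> f \<in> D'"
  then have e: "e \<in> E" "e \<notin> K'" and D': "circuit E indep D'" "D' \<subseteq> insert e K'" and f: "f \<in> D'"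
    using K'_def by auto
  show "\<psi> f = \<psi> e"
  proof (cases "e = b")
    case True
    then have "insert e K' = insert a K" using K'_def b by auto
    then have "D' = A" using uniq[OF iK(1)] D' A by auto
    then show ?thesis using gA f b True by auto
  next
    case False
    then have eK: "e \<notin> K" "e \<noteq> a" using e K'_def by auto
    obtain D where D: "circuit E indep D" "D \<subseteq> insert e K" using fund K e eK by blast
    have gD: "\<psi> x = \<psi> e" if "x \<in> D" for x using g e eK D that unfolding good_def by blast
    show ?thesis
    proof (cases "b \<in> D")
      case False
      then have "D \<subseteq> insert e K'" using D K'_def by auto
      then have "D = D'" using uniq[OF iK(2)] D D' by auto
      then show ?thesis using gD f by auto
    next
      case True
      have "e \<in> D" using circ_in_ins D iK by auto
      then have "D \<noteq> A" using A eK by auto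
      then have "\<not> indep ((D \<union> A) - {b})" using elim D A True b by auto
      moreover have "(D \<union> A) - {b} \<subseteq> E" using D A by (auto simp: circuit_def)
      ultimately obtain D'' where D'': "D'' \<subseteq> (D \<union> A) - {b}" "circuit E indep D''"
        using circ_exists by blast
      have "D'' \<subseteq> insert e K'" using D'' D A K'_def by auto
      then have "D'' = D'" using uniq[OF iK(2)] D'' D' by auto
      then have "f \<in> D \<union> A" using f D'' by auto
      then show ?thesis
      proof
        assume "f \<in> D" then show ?thesis using gD by auto
      next
        assume "f \<in> A" then have "\<psi> f = \<psi> a" using gA by auto
        moreover have "\<psi> b = \<psi> a" using gA b by auto
        moreover have "\<psi> b = \<psi> e" using gD True by auto
        ultimately show ?thesis by simp
      qed
    qed
  qed
qed

lemma good_label: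
  fixes \<psi> :: "'a \<Rightarrow> 'g::ab_group_add"
  shows "basis E indep K \<Longrightarrow> good E indep \<psi> K \<Longrightarrow> basis E indep B' \<Longrightarrow> card (B' - K) = n
     \<Longrightarrow> label \<psi> K = label \<psi> B'"
proof (induction n arbitrary: K)
  case 0
  have "finite B'" using indfin bas_ind 0(3) by blast
  then have "B' - K = {}" using 0(4) by simp
  then have "B' \<subseteq> K" by auto
  then have "K = B'" using bas_max[OF 0(3) bas_ind[OF 0(1)]] by simp
  then show ?case by simp
next
  case (Suc n)
  note bK = Suc.prems(1) and gK = Suc.prems(2) and bB = Suc.prems(3) and cB = Suc.prems(4)
  have iK: "indep K" using bas_ind[OF bK] .
  have iB: "indep B'" using bas_ind[OF bB] .
  have "B' - K \<noteq> {}"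
  proof
    assume "B' - K = {}"
    then show False using cB by (metis card.empty Zero_not_Suc)
  qed
  then obtain e where e: "e \<in> B'" "e \<notin> K" by blast
  have eE: "e \<in> E" using e indE[OF iB] by blast
  obtain A where A: "circuit E indep A" "A \<subseteq> insert e K" using fund[OF bK eE e(2)] by blast
  have "\<not> A \<subseteq> B'" using indsub[OF iB] circ_dep[OF A(1)] by blast
  then obtain f where f: "f \<in> A" "f \<notin> B'" by auto
  then have fK: "f \<in> K" using A e by auto
  define K1 where "K1 = insert e (K - {f})"
  have b1: "basis E indep K1" unfolding K1_def by (rule exchange[OF bK eE e(2) A f(1) fK])
  have g1: "good E indep \<psi> K1" unfolding K1_def by (rule good_pres[OF bK gK eE e(2) A f(1) fK])
  have "\<psi> f = \<psi> e" using gK eE e A f unfolding good_def by blast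
  moreover have "label \<psi> K1 = label \<psi> K - \<psi> f + \<psi> e"
    unfolding K1_def by (rule label_exch[OF indfin[OF iK] fK e(2)])
  ultimately have l: "label \<psi> K1 = label \<psi> K" by simp
  have "B' - K1 = (B' - K) - {e}" using K1_def f by auto
  moreover have "finite (B' - K)" using indfin[OF iB] by simp
  ultimately have "card (B' - K1) = n" using cB e by (simp add: card_Diff_singleton)
  then have "label \<psi> K1 = label \<psi> B'" using Suc.IH[OF b1 g1 bB] by simp
  then show ?case using l by simp
qed

lemma comp_iff:
  "(\<forall>K \<in> components E indep. \<forall>x\<in>K. \<forall>y\<in>K. \<psi> x = \<psi> y)
   \<longleftrightarrow> (\<forall>C x y. circuit E indep C \<and> x \<in> C \<and> y \<in> C \<longrightarrow> \<psi> x = \<psi> y)"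
proof
  assume H: "\<forall>K \<in> components E indep. \<forall>x\<in>K. \<forall>y\<in>K. \<psi> x = \<psi> y"
  show "\<forall>C x y. circuit E indep C \<and> x \<in> C \<and> y \<in> C \<longrightarrow> \<psi> x = \<psi> y"
  proof (intro allI impI)
    fix C x y assume C: "circuit E indep C \<and> x \<in> C \<and> y \<in> C"
    then have xy: "x \<in> E" "y \<in> E" using circ_sub by auto
    define K where "K = {z. same_component E indep x z}"
    have KC: "K \<in> components E indep" unfolding components_def K_def using xy(1) by blast
    have "same_component E indep x x" unfolding same_component_def using xy by simp
    then have xK: "x \<in> K" unfolding K_def by simp
    have "same_component E indep x y" unfolding same_component_def using xy C by blast
    then have yK: "y \<in> K" unfolding K_def by simp
    show "\<psi> x = \<psi> y" using H KC xK yK by blast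
  qed
next
  assume H: "\<forall>C x y. circuit E indep C \<and> x \<in> C \<and> y \<in> C \<longrightarrow> \<psi> x = \<psi> y"
  show "\<forall>K \<in> components E indep. \<forall>x\<in>K. \<forall>y\<in>K. \<psi> x = \<psi> y"
  proof (intro ballI)
    fix K y z assume K: "K \<in> components E indep" and yz: "y \<in> K" "z \<in> K"
    then obtain x where K: "K = {w. same_component E indep x w}" unfolding components_def by blast
    have *: "\<psi> w = \<psi> x" if sc: "same_component E indep x w" for w
    proof -
      have "x = w \<or> (\<exists>C. circuit E indep C \<and> x \<in> C \<and> w \<in> C)"
        using sc unfolding same_component_def by simp
      then show ?thesis
      proof
        assume "x = w" then show ?thesis by simp
      next
        assume "\<exists>C. circuit E indep C \<and> x \<in> C \<and> w \<in> C"
        then obtain C where "circuit E indep C" "x \<in> C" "w \<in> C" by blast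
        then show ?thesis using H by blast
      qed
    qed
    have "\<psi> y = \<psi> x" using * yz K by blast
    moreover have "\<psi> z = \<psi> x" using * yz K by blast
    ultimately show "\<psi> y = \<psi> z" by simp
  qed
qed
end

theorem theorem3p1:
  fixes E :: "'a set" and indep :: "'a set \<Rightarrow> bool" and \<psi> :: "'a \<Rightarrow> 'g::ab_group_add"
  assumes "matroid E indep"
  shows "((\<forall>B B'. basis E indep B \<and> basis E indep B' \<longrightarrow> label \<psi> B = label \<psi> B')
          \<longleftrightarrow> (\<exists>B. basis E indep B \<and>
                 (\<forall>B'. basis E indep B' \<and> card (B - B') \<le> 1 \<longrightarrow> label \<psi> B' = label \<psi> B)))
       \<and> ((\<exists>B. basis E indep B \<and>
                 (\<forall>B'. basis E indep B' \<and> card (B - B') \<le> 1 \<longrightarrow> label \<psi> B' = label \<psi> B))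
          \<longleftrightarrow> (\<forall>K \<in> components E indep. \<forall>x\<in>K. \<forall>y\<in>K. \<psi> x = \<psi> y))"
proof -
  note M = assms
  let ?i = "\<forall>B B'. basis E indep B \<and> basis E indep B' \<longrightarrow> label \<psi> B = label \<psi> B'"
  let ?ii = "\<exists>B. basis E indep B \<and>
                 (\<forall>B'. basis E indep B' \<and> card (B - B') \<le> 1 \<longrightarrow> label \<psi> B' = label \<psi> B)"
  let ?c = "\<forall>C x y. circuit E indep C \<and> x \<in> C \<and> y \<in> C \<longrightarrow> \<psi> x = \<psi> y"
  have exB: "\<exists>B. basis E indep B"
    using extend_basis[OF M, of "{}"] M by (auto simp: matroid_def)
  have good_i: "?i" if bK: "basis E indep K" and gK: "good E indep \<psi> K" for K
  proof (intro allI impI)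
    fix B1 B2 assume "basis E indep B1 \<and> basis E indep B2"
    then have "label \<psi> K = label \<psi> B1" "label \<psi> K = label \<psi> B2"
      using good_label[OF M bK gK] by auto
    then show "label \<psi> B1 = label \<psi> B2" by simp
  qed
  have i_ii: "?i \<Longrightarrow> ?ii" using exB by blast
  have ii_i: "?i" if "?ii"
  proof -
    from that obtain B where B: "basis E indep B"
      and H: "\<forall>B'. basis E indep B' \<and> card (B - B') \<le> 1 \<longrightarrow> label \<psi> B' = label \<psi> B" by blast
    have "good E indep \<psi> B" unfolding good_def
    proof (intro allI impI)
      fix e C f assume A: "e \<in> E - B \<and> circuit E indep C \<and> C \<subseteq> insert e B \<and> f \<in> C"
      show "\<psi> f = \<psi> e"
      proof (cases "f = e")
        case False
        then have fB: "f \<in> B" using A by auto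
        let ?B' = "insert e (B - {f})"
        have b: "basis E indep ?B'" using exchange[OF M B] A fB by auto
        have "B - ?B' = {f}" using A fB by auto
        then have "label \<psi> ?B' = label \<psi> B" using H b by auto
        moreover have "label \<psi> ?B' = label \<psi> B - \<psi> f + \<psi> e"
        proof -
          have "finite B" using indfin[OF M] B unfolding basis_def by blast
          then show ?thesis using label_exch[OF M] fB A by auto
        qed
        ultimately show ?thesis by (simp add: algebra_simps)
      qed simp
    qed
    then show ?thesis using B by (rule good_i[rotated])
  qed
  have i_c: "?c" if I: "?i"
  proof (intro allI impI)
    fix C x y assume A: "circuit E indep C \<and> x \<in> C \<and> y \<in> C"
    show "\<psi> x = \<psi> y"
    proof (cases "x = y")
      case False
      have "indep (C - {x})" using A by (intro circ_del[OF M]) auto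
      then obtain B1 where B1: "basis E indep B1" "C - {x} \<subseteq> B1" using extend_basis[OF M, of "C - {x}"] by blast
      have xB: "x \<notin> B1"
      proof
        assume "x \<in> B1"
        then have "C \<subseteq> B1" using B1 by auto
        then show False using B1 A indsub[OF M] bas_ind[OF M] circ_dep[OF M] by blast
      qed
      have xE: "x \<in> E" using A circ_sub[OF M] by auto
      have yB: "y \<in> B1" using B1 A False by auto
      have b: "basis E indep (insert x (B1 - {y}))"
        using exchange[OF M B1(1) xE xB] A B1 yB by auto
      have "label \<psi> (insert x (B1 - {y})) = label \<psi> B1 - \<psi> y + \<psi> x"
      proof -
        have "finite B1" using indfin[OF M] B1 unfolding basis_def by blast
        then show ?thesis using label_exch[OF M] yB xB by auto
      qed
      moreover have "label \<psi> (insert x (B1 - {y})) = label \<psi> B1" using I b B1 by blast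
      ultimately show ?thesis by (simp add: algebra_simps)
    qed simp
  qed
  have c_i: "?i" if C: "?c"
  proof -
    obtain B where B: "basis E indep B" using exB by blast
    have "good E indep \<psi> B" unfolding good_def
    proof (intro allI impI)
      fix e D f assume A: "e \<in> E - B \<and> circuit E indep D \<and> D \<subseteq> insert e B \<and> f \<in> D"
      then have "e \<in> D" using circ_in_ins[OF M] bas_ind[OF M B] by blast
      then show "\<psi> f = \<psi> e" using C A by blast
    qed
    then show ?thesis using B by (rule good_i[rotated])
  qed
  have ce: "(\<forall>K \<in> components E indep. \<forall>x\<in>K. \<forall>y\<in>K. \<psi> x = \<psi> y) \<longleftrightarrow> ?c"
    using comp_iff[OF M] .
  show ?thesis
  proof (intro conjI iffI)
    assume "?i" then show "?ii" by (rule i_ii)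
  next
    assume "?ii" then show "?i" by (rule ii_i)
  next
    assume "?ii" then have "?i" by (rule ii_i)
    then have "?c" by (rule i_c)
    then show "\<forall>K \<in> components E indep. \<forall>x\<in>K. \<forall>y\<in>K. \<psi> x = \<psi> y" by (rule ce[THEN iffD2])
  next
    assume "\<forall>K \<in> components E indep. \<forall>x\<in>K. \<forall>y\<in>K. \<psi> x = \<psi> y"
    then have "?c" by (rule ce[THEN iffD1])
    then have "?i" by (rule c_i)
    then show "?ii" by (rule i_ii)
  qed
qed

end
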